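(* Let $Q$ be a set and let $\{*_\alpha\}_{\alpha\in\Lambda}$ be a family of quandle operations on $Q$ that are pairwise distributive with respect to each other, i.e. $(a*_\alpha b)*_\beta c=(a*_\beta c)*_\alpha(b*_\beta c)$ for all $\alpha,\beta\in\Lambda$ and $a,b,c\in Q$. Let $F$ be the free group on the symbols $*_\alpha$, $\alpha\in\Lambda$. For $w\in F$ written as a word $s_1\cdots s_k$ with each $s_i\in\{*_\alpha,*_\alpha^{-1}:\alpha\in\Lambda\}$, define $\star_w\colon Q\times Q\to Q$ by $$a\star_w b=(\cdots((a\,s_1\,b)\,s_2\,b)\cdots)\,s_k\,b,$$ where the letter $*_\alpha^{-1}$ acts as the right inverse operation $\bar*_\alpha$ of $*_\alpha$ (and the empty word gives $a\star_e b=a$). Then every $(Q,\star_w)$, $w\in F$, is a quandle, and the set $\{(Q,\star_w)\mid w\in F\}$ is closed under quandle multiplication.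
   Context: A quandle operation on $Q$ is a binary operation $*$ with $x*x=x$, unique right division, and $(x*y)*z=(x*z)*(y*z)$. The right inverse $\bar*$ of $*$ is defined by $a=c*b\iff c=a\,\bar*\,b$. The (quandle) multiplication of two groupoid structures $(Q,\circ)$ and $(Q,* )$ on the same set is $(Q,\circ)(Q,* )=(Q,\circ* )$, where $a\,(\circ* )\,b=(a\circ b)*b$. *)

theory Defs
  imports Main
begin

text \<open>A quandle operation on a carrier set Q (operations are functions on the
ambient type; only their behaviour on Q matters).\<close>
definition quandle_on :: "'a set \<Rightarrow> ('a \<Rightarrow> 'a \<Rightarrow> 'a) \<Rightarrow> bool" where
  "quandle_on Q op \<longleftrightarrow>
     (\<forall>a\<in>Q. \<forall>b\<in>Q. op a b \<in> Q) \<and>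
     (\<forall>a\<in>Q. op a a = a) \<and>
     (\<forall>a\<in>Q. \<forall>b\<in>Q. \<exists>!c. c \<in> Q \<and> op c b = a) \<and>
     (\<forall>a\<in>Q. \<forall>b\<in>Q. \<forall>c\<in>Q. op (op a b) c = op (op a c) (op b c))"

definition rdiv :: "'a set \<Rightarrow> ('a \<Rightarrow> 'a \<Rightarrow> 'a) \<Rightarrow> 'a \<Rightarrow> 'a \<Rightarrow> 'a" where
  "rdiv Q op a b = (THE c. c \<in> Q \<and> op c b = a)"

definition pairwise_distributive ::
  "'a set \<Rightarrow> 'l set \<Rightarrow> ('l \<Rightarrow> 'a \<Rightarrow> 'a \<Rightarrow> 'a) \<Rightarrow> bool" where
  "pairwise_distributive Q \<Lambda> ops \<longleftrightarrow>
     (\<forall>al\<in>\<Lambda>. \<forall>be\<in>\<Lambda>. \<forall>a\<in>Q. \<forall>b\<in>Q. \<forall>c\<in>Q.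
        ops be (ops al a b) c = ops al (ops be a c) (ops be b c))"

text \<open>Words over the letters *_al (encoded (al, True)) and *_al^-1
(encoded (al, False)). Elements of the free group F on {*_al | al in Lambda} are
represented by reduced words over Lambda.\<close>
type_synonym 'l letter = "'l \<times> bool"

definition reduced_word :: "'l letter list \<Rightarrow> bool" where
  "reduced_word w \<longleftrightarrow>
     (\<forall>i. Suc i < length w \<longrightarrow>
        \<not> (fst (w ! i) = fst (w ! Suc i) \<and> snd (w ! i) \<noteq> snd (w ! Suc i)))"

definition free_group_elems :: "'l set \<Rightarrow> 'l letter list set" where
  "free_group_elems \<Lambda> = {w. set (map fst w) \<subseteq> \<Lambda> \<and> reduced_word w}"

definition star_w ::
  "'a set \<Rightarrow> ('l \<Rightarrow> 'a \<Rightarrow> 'a \<Rightarrow> 'a) \<Rightarrow> 'l letter list \<Rightarrow> 'a \<Rightarrow> 'a \<Rightarrow> 'a" where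
  "star_w Q ops w a b =
     foldl (\<lambda>x (al, s). if s then ops al x b else rdiv Q (ops al) x b) a w"

definition qmult :: "('a \<Rightarrow> 'a \<Rightarrow> 'a) \<Rightarrow> ('a \<Rightarrow> 'a \<Rightarrow> 'a) \<Rightarrow> 'a \<Rightarrow> 'a \<Rightarrow> 'a" where
  "qmult f g a b = g (f a b) b"

end

theory Submission
  imports Defs
begin

definition lstep :: "'a set \<Rightarrow> ('l \<Rightarrow> 'a \<Rightarrow> 'a \<Rightarrow> 'a) \<Rightarrow> 'l letter \<Rightarrow> 'a \<Rightarrow> 'a \<Rightarrow> 'a" where
  "lstep Q ops l x b = (if snd l then ops (fst l) x b else rdiv Q (ops (fst l)) x b)"

lemma star_w_foldl: "star_w Q ops w a b = foldl (\<lambda>x l. lstep Q ops l x b) a w"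
proof -
  have "(\<lambda>x (al, s). if s then ops al x b else rdiv Q (ops al) x b) = (\<lambda>x l. lstep Q ops l x b)"
    by (auto simp: lstep_def fun_eq_iff split: prod.splits)
  then show ?thesis unfolding star_w_def by simp
qed

lemma star_nil[simp]: "star_w Q ops [] a b = a"
  by (simp add: star_w_foldl)
lemma star_snoc[simp]: "star_w Q ops (w @ [l]) a b = lstep Q ops l (star_w Q ops w a b) b"
  by (simp add: star_w_foldl)
lemma star_append: "star_w Q ops (u @ v) a b = star_w Q ops v (star_w Q ops u a b) b"
  by (simp add: star_w_foldl)
lemma star_cons: "star_w Q ops (l # v) a b = star_w Q ops v (lstep Q ops l a b) b"
  by (simp add: star_w_foldl)

context
  fixes Q :: "'a set" and op :: "'a \<Rightarrow> 'a \<Rightarrow> 'a"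
  assumes q: "quandle_on Q op"
begin

lemma op_closed: "a \<in> Q \<Longrightarrow> b \<in> Q \<Longrightarrow> op a b \<in> Q"
  using q by (simp add: quandle_on_def)

lemma op_idem: "a \<in> Q \<Longrightarrow> op a a = a"
  using q by (simp add: quandle_on_def)

lemma rdiv_props: assumes "a \<in> Q" "b \<in> Q"
  shows "rdiv Q op a b \<in> Q \<and> op (rdiv Q op a b) b = a"
proof -
  have "\<exists>!c. c \<in> Q \<and> op c b = a" using q assms by (simp add: quandle_on_def)
  from theI'[OF this] show ?thesis by (simp add: rdiv_def)
qed

lemma rdiv_unique: assumes "a \<in> Q" "b \<in> Q" "c \<in> Q" "op c b = a"
  shows "rdiv Q op a b = c"
proof -
  have u: "\<exists>!c. c \<in> Q \<and> op c b = a" using q assms by (simp add: quandle_on_def)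
  show ?thesis using rdiv_props[OF assms(1,2)] u assms by blast
qed

lemma op_inj: assumes "c \<in> Q" "d \<in> Q" "b \<in> Q" "op c b = op d b" shows "c = d"
  using rdiv_unique[OF op_closed[OF assms(2,3)] assms(3) assms(1) assms(4)]
        rdiv_unique[OF op_closed[OF assms(2,3)] assms(3) assms(2) refl] by simp

end

context
  fixes Q :: "'a set" and \<Lambda> :: "'l set" and ops :: "'l \<Rightarrow> 'a \<Rightarrow> 'a \<Rightarrow> 'a"
  assumes quandles: "\<forall>al\<in>\<Lambda>. quandle_on Q (ops al)"
    and distr: "pairwise_distributive Q \<Lambda> ops"
begin

lemma qa: "al \<in> \<Lambda> \<Longrightarrow> quandle_on Q (ops al)" using quandles by blast

lemma L_closed: "fst l \<in> \<Lambda> \<Longrightarrow> x \<in> Q \<Longrightarrow> b \<in> Q \<Longrightarrow> lstep Q ops l x b \<in> Q"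
proof -
  assume "fst l \<in> \<Lambda>" "x \<in> Q" "b \<in> Q"
  note Q = qa[OF this(1)]
  show ?thesis using op_closed[OF Q \<open>x \<in> Q\<close> \<open>b \<in> Q\<close>]
    rdiv_props[OF Q \<open>x \<in> Q\<close> \<open>b \<in> Q\<close>] unfolding lstep_def by (cases "snd l") simp_all
qed

lemma L_idem: "fst l \<in> \<Lambda> \<Longrightarrow> a \<in> Q \<Longrightarrow> lstep Q ops l a a = a"
proof -
  assume "fst l \<in> \<Lambda>" "a \<in> Q"
  note Q = qa[OF this(1)]
  show ?thesis using op_idem[OF Q \<open>a \<in> Q\<close>]
    rdiv_unique[OF Q \<open>a \<in> Q\<close> \<open>a \<in> Q\<close> \<open>a \<in> Q\<close> op_idem[OF Q \<open>a \<in> Q\<close>]]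
    unfolding lstep_def by (cases "snd l") simp_all
qed

lemma L_div: assumes "fst l \<in> \<Lambda>" "a \<in> Q" "b \<in> Q"
  shows "\<exists>!c. c \<in> Q \<and> lstep Q ops l c b = a"
proof (cases "snd l")
  case True
  have "\<forall>a\<in>Q. \<forall>b\<in>Q. \<exists>!c. c \<in> Q \<and> ops (fst l) c b = a"
    using qa[OF assms(1)] unfolding quandle_on_def by blast
  then show ?thesis using True assms(2,3) unfolding lstep_def by simp
next
  case False
  note Q = qa[OF assms(1)]
  have "ops (fst l) a b \<in> Q \<and> rdiv Q (ops (fst l)) (ops (fst l) a b) b = a"
    using op_closed[OF Q assms(2,3)] rdiv_unique[OF Q op_closed[OF Q assms(2,3)] assms(3,2) refl] by simp
  moreover have "c = ops (fst l) a b" if "c \<in> Q" "rdiv Q (ops (fst l)) c b = a" for c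
    using rdiv_props[OF Q that(1) assms(3)] that by simp
  ultimately show ?thesis using False by (auto simp: lstep_def)
qed

lemma L_cancel: assumes "al \<in> \<Lambda>" "x \<in> Q" "b \<in> Q"
  shows "lstep Q ops (al, s) (lstep Q ops (al, \<not> s) x b) b = x"
proof (cases s)
  case True
  then show ?thesis using rdiv_props[OF qa[OF assms(1)] assms(2,3)] by (simp add: lstep_def)
next
  case False
  then show ?thesis using rdiv_unique[OF qa[OF assms(1)] op_closed[OF qa[OF assms(1)] assms(2,3)] assms(3,2) refl]
    by (simp add: lstep_def)
qed

lemma D: "al \<in> \<Lambda> \<Longrightarrow> be \<in> \<Lambda> \<Longrightarrow> a \<in> Q \<Longrightarrow> b \<in> Q \<Longrightarrow> c \<in> Q \<Longrightarrow>
   ops be (ops al a b) c = ops al (ops be a c) (ops be b c)"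
  using distr unfolding pairwise_distributive_def by blast

lemma L_distr: assumes "fst l \<in> \<Lambda>" "fst m \<in> \<Lambda>" "a \<in> Q" "b \<in> Q" "c \<in> Q"
  shows "lstep Q ops m (lstep Q ops l a b) c = lstep Q ops l (lstep Q ops m a c) (lstep Q ops m b c)"
proof -
  obtain al s where l: "l = (al, s)" by (cases l)
  obtain be t where m: "m = (be, t)" by (cases m)
  have al: "al \<in> \<Lambda>" and be: "be \<in> \<Lambda>" using assms(1,2) unfolding l m by simp_all
  note Qa = qa[OF al] and Qb = qa[OF be]
  let ?r = "\<lambda>x y. rdiv Q (ops al) x y" and ?s = "\<lambda>x y. rdiv Q (ops be) x y"
  have ra: "\<And>x y. x \<in> Q \<Longrightarrow> y \<in> Q \<Longrightarrow> ?r x y \<in> Q \<and> ops al (?r x y) y = x"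
    using rdiv_props[OF Qa] by blast
  have rb: "\<And>x y. x \<in> Q \<Longrightarrow> y \<in> Q \<Longrightarrow> ?s x y \<in> Q \<and> ops be (?s x y) y = x"
    using rdiv_props[OF Qb] by blast
  have ca: "\<And>x y. x \<in> Q \<Longrightarrow> y \<in> Q \<Longrightarrow> ops al x y \<in> Q" using op_closed[OF Qa] .
  have cb: "\<And>x y. x \<in> Q \<Longrightarrow> y \<in> Q \<Longrightarrow> ops be x y \<in> Q" using op_closed[OF Qb] .
  have d1: "\<And>a b c. a \<in> Q \<Longrightarrow> b \<in> Q \<Longrightarrow> c \<in> Q \<Longrightarrow>
     ops be (ops al a b) c = ops al (ops be a c) (ops be b c)" using D[OF al be] .
  have d2: "?s (ops al a b) c = ops al (?s a c) (?s b c)" if "a \<in> Q" "b \<in> Q" "c \<in> Q" for a b c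
  proof -
    have sa: "?s a c \<in> Q" "ops be (?s a c) c = a" using rb[OF that(1,3)] by auto
    have sb: "?s b c \<in> Q" "ops be (?s b c) c = b" using rb[OF that(2,3)] by auto
    have "ops be (ops al (?s a c) (?s b c)) c = ops al a b"
      using d1[OF sa(1) sb(1) that(3)] sa(2) sb(2) by simp
    from rdiv_unique[OF Qb ca[OF that(1,2)] that(3) ca[OF sa(1) sb(1)] this] show ?thesis .
  qed
  have d3: "ops be (?r a b) c = ?r (ops be a c) (ops be b c)" if "a \<in> Q" "b \<in> Q" "c \<in> Q" for a b c
  proof -
    have r: "?r a b \<in> Q" "ops al (?r a b) b = a" using ra[OF that(1,2)] by auto
    have "ops al (ops be (?r a b) c) (ops be b c) = ops be a c"
      using d1[OF r(1) that(2,3)] r(2) by simp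
    from rdiv_unique[OF Qa cb[OF that(1,3)] cb[OF that(2,3)] cb[OF r(1) that(3)] this]
    show ?thesis by simp
  qed
  have d4: "?s (?r a b) c = ?r (?s a c) (?s b c)" if "a \<in> Q" "b \<in> Q" "c \<in> Q" for a b c
  proof -
    have sa: "?s a c \<in> Q" "ops be (?s a c) c = a" using rb[OF that(1,3)] by auto
    have sb: "?s b c \<in> Q" "ops be (?s b c) c = b" using rb[OF that(2,3)] by auto
    have "ops be (?r (?s a c) (?s b c)) c = ?r a b"
      using d3[OF sa(1) sb(1) that(3)] sa(2) sb(2) by simp
    from rdiv_unique[OF Qb conjunct1[OF ra[OF that(1,2)]] that(3) conjunct1[OF ra[OF sa(1) sb(1)]] this]
    show ?thesis .
  qed
  show ?thesis
  proof (cases s; cases t)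
    assume "s" "t" then show ?thesis unfolding l m lstep_def using d1[OF assms(3-5)] by simp
  next
    assume "s" "\<not> t" then show ?thesis unfolding l m lstep_def using d2[OF assms(3-5)] by simp
  next
    assume "\<not> s" "t" then show ?thesis unfolding l m lstep_def using d3[OF assms(3-5)] by simp
  next
    assume "\<not> s" "\<not> t" then show ?thesis unfolding l m lstep_def using d4[OF assms(3-5)] by simp
  qed
qed

abbreviation "inL w \<equiv> set (map fst w) \<subseteq> \<Lambda>"

lemma W_closed: "inL w \<Longrightarrow> a \<in> Q \<Longrightarrow> b \<in> Q \<Longrightarrow> star_w Q ops w a b \<in> Q"
  by (induction w rule: rev_induct) (auto intro!: L_closed)

lemma W_idem: "inL w \<Longrightarrow> a \<in> Q \<Longrightarrow> star_w Q ops w a a = a"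
  by (induction w rule: rev_induct) (auto simp: L_idem)

lemma W_div: "inL w \<Longrightarrow> a \<in> Q \<Longrightarrow> b \<in> Q \<Longrightarrow> \<exists>!c. c \<in> Q \<and> star_w Q ops w c b = a"
proof (induction w arbitrary: a rule: rev_induct)
  case Nil then show ?case by auto
next
  case (snoc l w)
  then have l: "fst l \<in> \<Lambda>" and w: "inL w" by auto
  obtain d where d: "d \<in> Q" "lstep Q ops l d b = a"
    and du: "\<And>d'. d' \<in> Q \<Longrightarrow> lstep Q ops l d' b = a \<Longrightarrow> d' = d"
    using L_div[OF l snoc.prems(2,3)] by blast
  obtain c where c: "c \<in> Q" "star_w Q ops w c b = d"
    and cu: "\<And>c'. c' \<in> Q \<Longrightarrow> star_w Q ops w c' b = d \<Longrightarrow> c' = c"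
    using snoc.IH[OF w d(1) snoc.prems(3)] by blast
  show ?case
  proof (rule ex1I[of _ c])
    show "c \<in> Q \<and> star_w Q ops (w @ [l]) c b = a" using c d by simp
  next
    fix c' assume "c' \<in> Q \<and> star_w Q ops (w @ [l]) c' b = a"
    then show "c' = c" using du cu W_closed[OF w _ snoc.prems(3)] by auto
  qed
qed

lemma W_distr_letter: "inL w \<Longrightarrow> fst l \<in> \<Lambda> \<Longrightarrow> a \<in> Q \<Longrightarrow> b \<in> Q \<Longrightarrow> c \<in> Q \<Longrightarrow>
  star_w Q ops w (lstep Q ops l a b) c = lstep Q ops l (star_w Q ops w a c) (star_w Q ops w b c)"
proof (induction w rule: rev_induct)
  case Nil then show ?case by simp
next
  case (snoc m w)
  then show ?case using L_distr[of l m "star_w Q ops w a c" "star_w Q ops w b c" c] W_closed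
    by auto
qed

lemma W_distr: "inL w \<Longrightarrow> inL v \<Longrightarrow> a \<in> Q \<Longrightarrow> b \<in> Q \<Longrightarrow> c \<in> Q \<Longrightarrow>
  star_w Q ops w (star_w Q ops v a b) c = star_w Q ops v (star_w Q ops w a c) (star_w Q ops w b c)"
proof (induction v rule: rev_induct)
  case Nil then show ?case by simp
next
  case (snoc m v)
  then show ?case using W_distr_letter[of w m "star_w Q ops v a b" b c] W_closed
    by auto
qed

lemma W_quandle: "inL w \<Longrightarrow> quandle_on Q (star_w Q ops w)"
proof -
  assume w: "inL w"
  show ?thesis unfolding quandle_on_def
  proof (intro conjI ballI)
    fix a b assume "a \<in> Q" "b \<in> Q"
    then show "star_w Q ops w a b \<in> Q" using W_closed[OF w] by blast
    show "\<exists>!c. c \<in> Q \<and> star_w Q ops w c b = a" using W_div[OF w \<open>a \<in> Q\<close> \<open>b \<in> Q\<close>] .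
  next
    fix a assume "a \<in> Q" then show "star_w Q ops w a a = a" using W_idem[OF w] by blast
  next
    fix a b c assume "a \<in> Q" "b \<in> Q" "c \<in> Q"
    then show "star_w Q ops w (star_w Q ops w a b) c = star_w Q ops w (star_w Q ops w a c) (star_w Q ops w b c)"
      using W_distr[OF w w] by blast
  qed
qed

lemma W_reduce: "inL w \<Longrightarrow> \<exists>w'\<in>free_group_elems \<Lambda>. \<forall>a\<in>Q. \<forall>b\<in>Q. star_w Q ops w' a b = star_w Q ops w a b"
proof (induction "length w" arbitrary: w rule: less_induct)
  case less
  show ?case
  proof (cases "reduced_word w")
    case True
    then show ?thesis using less.prems by (auto simp: free_group_elems_def)
  next
    case False
    then obtain i where i: "Suc i < length w" "fst (w ! i) = fst (w ! Suc i)"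
      "snd (w ! i) \<noteq> snd (w ! Suc i)" by (auto simp: reduced_word_def)
    define u where "u = take i w"
    define v where "v = drop (Suc (Suc i)) w"
    obtain al s where wi: "w ! i = (al, \<not> s)" by (cases "w ! i") auto
    have wsi: "w ! Suc i = (al, s)" using i wi by (cases "w ! Suc i") auto
    have wsplit: "w = u @ [(al, \<not> s), (al, s)] @ v"
    proof -
      have "w = take i w @ drop i w" by simp
      also have "drop i w = w ! i # drop (Suc i) w" using i by (simp add: Cons_nth_drop_Suc)
      also have "drop (Suc i) w = w ! Suc i # drop (Suc (Suc i)) w" using i by (simp add: Cons_nth_drop_Suc)
      finally show ?thesis using wi wsi by (simp add: u_def v_def)
    qed
    have "(al, \<not> s) \<in> set w" using wi i(1) by (metis Suc_lessD nth_mem)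
    then have al: "al \<in> \<Lambda>" using less.prems by force
    have uv: "inL (u @ v)" using less.prems wsplit by auto
    have len: "length (u @ v) < length w" using wsplit by simp
    obtain w' where w': "w' \<in> free_group_elems \<Lambda>" "\<forall>a\<in>Q. \<forall>b\<in>Q. star_w Q ops w' a b = star_w Q ops (u @ v) a b"
      using less.hyps[OF len uv] by blast
    have "star_w Q ops (u @ v) a b = star_w Q ops w a b" if "a \<in> Q" "b \<in> Q" for a b
    proof -
      have "inL u" using uv by auto
      then have "star_w Q ops u a b \<in> Q" using W_closed that by blast
      then show ?thesis using L_cancel[OF al _ that(2), of _ s] wsplit
        by (simp add: star_append star_cons)
    qed
    then show ?thesis using w' by auto
  qed
qed

end

theorem theorem4p12:
  fixes Q :: "'a set" and \<Lambda> :: "'l set" and ops :: "'l \<Rightarrow> 'a \<Rightarrow> 'a \<Rightarrow> 'a"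
  assumes quandles: "\<forall>al\<in>\<Lambda>. quandle_on Q (ops al)"
    and distr: "pairwise_distributive Q \<Lambda> ops"
  shows "(\<forall>w\<in>free_group_elems \<Lambda>. quandle_on Q (star_w Q ops w)) \<and>
         (\<forall>w1\<in>free_group_elems \<Lambda>. \<forall>w2\<in>free_group_elems \<Lambda>.
            \<exists>w3\<in>free_group_elems \<Lambda>. \<forall>a\<in>Q. \<forall>b\<in>Q.
              qmult (star_w Q ops w1) (star_w Q ops w2) a b = star_w Q ops w3 a b)"
proof (intro conjI ballI)
  fix w assume "w \<in> free_group_elems \<Lambda>"
  then show "quandle_on Q (star_w Q ops w)"
    using W_quandle[OF quandles distr] by (auto simp: free_group_elems_def)
next
  fix w1 w2 assume "w1 \<in> free_group_elems \<Lambda>" "w2 \<in> free_group_elems \<Lambda>"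
  then have "set (map fst (w1 @ w2)) \<subseteq> \<Lambda>" by (auto simp: free_group_elems_def)
  from W_reduce[OF quandles distr this] obtain w3 where
    "w3 \<in> free_group_elems \<Lambda>" "\<forall>a\<in>Q. \<forall>b\<in>Q. star_w Q ops w3 a b = star_w Q ops (w1 @ w2) a b"
    by blast
  then show "\<exists>w3\<in>free_group_elems \<Lambda>. \<forall>a\<in>Q. \<forall>b\<in>Q.
              qmult (star_w Q ops w1) (star_w Q ops w2) a b = star_w Q ops w3 a b"
  proof -
    assume h: "w3 \<in> free_group_elems \<Lambda>" "\<forall>a\<in>Q. \<forall>b\<in>Q. star_w Q ops w3 a b = star_w Q ops (w1 @ w2) a b"
    then have "\<forall>a\<in>Q. \<forall>b\<in>Q. qmult (star_w Q ops w1) (star_w Q ops w2) a b = star_w Q ops w3 a b"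
      by (simp add: qmult_def star_append)
    with h(1) show ?thesis by blast
  qed
qed

end
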